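(* Let $G=(V,E)$ have $|V|=2$, let $N>3$, $\varepsilon\in(0,\frac1{N-1}]$ and $s_0\in S_{nc}$. Then for every $\gamma\in(0,1)$, every trigger strategies profile $\bar\sigma$ of $\Gamma_N(G|s_0,\gamma,\varepsilon)$ is nonpositional.
   Context: Setting. $G=(V,E)$ is a finite, simple, connected, undirected graph; $N\ge 3$ is an integer; $\gamma\in(0,1)$ and $\varepsilon\in[0,\frac1{N-1}]$ are parameters. There are $N$ tokens: cops $C_1,\dots,C_{N-1}$ (tokens $1,\dots,N-1$) and the robber $R$ (token $N$). A state is $s=(x^1,\dots,x^N,n)$ where $x^i\in V$ is the position of token $i$ and $n\in\{1,\dots,N\}$ is the token that moves next; $S^n$ denotes the set of states with token $n$ to move. A state is a capture state if $x^i=x^N$ for some $i\le N-1$; $S_{nc}$ is the set of noncapture states. In each turn exactly one token, the one to move, moves to a vertex of its closed neighbourhood (it may stay put); the order of moves is $C_1,C_2,\dots,C_{N-1},R,C_1,\dots$. Starting from an initial state $s_0\in S_{nc}$ at time $0$, the capture time is the first time $t$ at which a capture state occurs (infinite if never); after capture the game is over. Auxiliary games. For $m\in\{1,\dots,N\}$, $\Gamma_N^m(G|s_0,\gamma,\varepsilon)$ is the two-player zero-sum game in which player $P_m$ controls token $m$ and player $P_{-m}$ controls all other tokens, with the following payoff to $P_m$ ($P_{-m}$ receives its negative): $0$ if no capture ever occurs; if capture occurs at time $t$: for $m=N$, $-\gamma^t$; for $m\le N-1$, $\frac{1-\varepsilon}{K}\gamma^t$ if exactly $K\in\{1,\dots,N-2\}$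 cops, including $C_m$, are on the robber's vertex, $\frac{\varepsilon}{N-K-1}\gamma^t$ if exactly $K\in\{1,\dots,N-2\}$ cops, not including $C_m$, are on the robber's vertex, and $\frac{\gamma^t}{N-1}$ if all $N-1$ cops are on the robber's vertex. $\Gamma^N_N$ is the modified cops-and-robber (CR) game. A pure positional strategy for token $n$ maps each state in $S^n\cap S_{nc}$ to an allowed next vertex. Each $\Gamma^m_N$ has optimal pure positional strategies (optimal from every initial state). For $m,n\in\{1,\dots,N\}$, $\phi^n_m$ denotes the strategy of token $n$ in a chosen pair of optimal pure positional strategies of $\Gamma^m_N$ (so $\phi^m_m$ is $P_m$'s optimal strategy and $(\phi^n_m)_{n\ne m}$ is $P_{-m}$'s). $\widehat\Sigma^n$ is the set of pure positional strategies of token $n$ that are components of optimal strategy pairs of $\Gamma^N_N$ (CR-optimal strategies). Trigger strategies. Given a choice of $(\phi^n_m)_{n,m}$, the trigger strategies profile $\bar\sigma=(\bar\sigma^1,\dots,\bar\sigma^N)$ of the $N$-player SCAR game $\Gamma_N(G|s_0,\gamma,\varepsilon)$ (same board and moves; player $n$ controls token $n$) is: token $n$, at current state $s$, plays $\phi^n_n(s)$ as long as every other player $m$ has followed $\phi^m_m$, and plays $\phi^n_m(s)$ from the moment a player $m\neq n$ deviates from $\phi^m_m$. Different choices of the optimal strategies give different trigger strategies profiles. $\bar\sigma$ is called positional if for all $n,m\in\{1,\dots,N\}$ there is $\widehat\sigma^n\in\widehat\Sigma^n$ with $\phi^n_m(s)=\widehat\sigma^n(s)$ for every state $s\in S^n\cap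 S_{nc}$ reachable from $s_0$ by a finite sequence of legal moves passing only through noncapture states; otherwise $\bar\sigma$ is nonpositional. *)

theory Defs
  imports Complex_Main "HOL-Library.FuncSet"
begin

text \<open>A state: positions of tokens 1..N (extensional function, undefined outside 1..N)
  and the token that moves next.\<close>
type_synonym 'v state = "(nat \<Rightarrow> 'v) \<times> nat"

definition simple_graph :: "'v set \<Rightarrow> ('v \<Rightarrow> 'v \<Rightarrow> bool) \<Rightarrow> bool" where
  "simple_graph V E \<longleftrightarrow> finite V \<and> V \<noteq> {} \<and>
     (\<forall>u v. E u v \<longrightarrow> u \<in> V \<and> v \<in> V \<and> u \<noteq> v \<and> E v u)"

definition connected_graph :: "'v set \<Rightarrow> ('v \<Rightarrow> 'v \<Rightarrow> bool) \<Rightarrow> bool" where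
  "connected_graph V E \<longleftrightarrow> (\<forall>u\<in>V. \<forall>v\<in>V. E\<^sup>*\<^sup>* u v)"

definition cnbhd :: "'v set \<Rightarrow> ('v \<Rightarrow> 'v \<Rightarrow> bool) \<Rightarrow> 'v \<Rightarrow> 'v set" where
  "cnbhd V E u = {w \<in> V. w = u \<or> E u w}"

definition game_states :: "nat \<Rightarrow> 'v set \<Rightarrow> 'v state set" where
  "game_states N V = {(x, n). x \<in> {1..N} \<rightarrow>\<^sub>E V \<and> n \<in> {1..N}}"

text \<open>Capture: some cop (token 1..N-1) on the robber's (token N) vertex.\<close>
definition is_capture :: "nat \<Rightarrow> 'v state \<Rightarrow> bool" where
  "is_capture N s \<longleftrightarrow> (\<exists>i\<in>{1..N-1}. fst s i = fst s N)"

definition next_token :: "nat \<Rightarrow> nat \<Rightarrow> nat" where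
  "next_token N n = n mod N + 1"

definition step :: "nat \<Rightarrow> 'v state \<Rightarrow> 'v \<Rightarrow> 'v state" where
  "step N s v = ((fst s)(snd s := v), next_token N (snd s))"

definition legal_strategy ::
  "nat \<Rightarrow> 'v set \<Rightarrow> ('v \<Rightarrow> 'v \<Rightarrow> bool) \<Rightarrow> nat \<Rightarrow> ('v state list \<Rightarrow> 'v) \<Rightarrow> bool" where
  "legal_strategy N V E n \<sigma> \<longleftrightarrow>
     (\<forall>h. h \<noteq> [] \<and> last h \<in> game_states N V \<and> snd (last h) = n \<and> \<not> is_capture N (last h)
          \<longrightarrow> \<sigma> h \<in> cnbhd V E (fst (last h) n))"

definition legal_pos_strategy ::
  "nat \<Rightarrow> 'v set \<Rightarrow> ('v \<Rightarrow> 'v \<Rightarrow> bool) \<Rightarrow> nat \<Rightarrow> ('v state \<Rightarrow> 'v) \<Rightarrow> bool" where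
  "legal_pos_strategy N V E n f \<longleftrightarrow>
     (\<forall>s\<in>game_states N V. snd s = n \<and> \<not> is_capture N s \<longrightarrow> f s \<in> cnbhd V E (fst s n))"

definition pos_to_hist :: "('v state \<Rightarrow> 'v) \<Rightarrow> ('v state list \<Rightarrow> 'v)" where
  "pos_to_hist f = (\<lambda>h. f (last h))"

fun history :: "nat \<Rightarrow> (nat \<Rightarrow> 'v state list \<Rightarrow> 'v) \<Rightarrow> 'v state \<Rightarrow> nat \<Rightarrow> 'v state list" where
  "history N \<tau> s0 0 = [s0]"
| "history N \<tau> s0 (Suc t) =
     (let h = history N \<tau> s0 t in h @ [step N (last h) (\<tau> (snd (last h)) h)])"

definition play :: "nat \<Rightarrow> (nat \<Rightarrow> 'v state list \<Rightarrow> 'v) \<Rightarrow> 'v state \<Rightarrow> nat \<Rightarrow> 'v state" where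
  "play N \<tau> s0 t = last (history N \<tau> s0 t)"

definition reward :: "nat \<Rightarrow> real \<Rightarrow> nat \<Rightarrow> 'v state \<Rightarrow> real" where
  "reward N \<epsilon> m s =
     (if m = N then -1
      else (let K = card {i\<in>{1..N-1}. fst s i = fst s N} in
            if K = N - 1 then 1 / real (N - 1)
            else if fst s m = fst s N then (1 - \<epsilon>) / real K
            else \<epsilon> / real (N - K - 1)))"

definition payoff ::
  "nat \<Rightarrow> real \<Rightarrow> real \<Rightarrow> nat \<Rightarrow> (nat \<Rightarrow> 'v state list \<Rightarrow> 'v) \<Rightarrow> 'v state \<Rightarrow> real" where
  "payoff N \<gamma> \<epsilon> m \<tau> s0 =
     (if \<exists>t. is_capture N (play N \<tau> s0 t)
      then (let t0 = (LEAST t. is_capture N (play N \<tau> s0 t))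
            in reward N \<epsilon> m (play N \<tau> s0 t0) * \<gamma> ^ t0)
      else 0)"

text \<open>phi (one pure positional strategy per token) is a pair of optimal pure positional
  strategies of Gamma^m_N (token m vs. all other tokens), optimal from every initial
  noncapture state: a saddle point against arbitrary (history-dependent) deviations.\<close>
definition optimal_pair ::
  "nat \<Rightarrow> 'v set \<Rightarrow> ('v \<Rightarrow> 'v \<Rightarrow> bool) \<Rightarrow> real \<Rightarrow> real \<Rightarrow> nat \<Rightarrow> (nat \<Rightarrow> 'v state \<Rightarrow> 'v) \<Rightarrow> bool" where
  "optimal_pair N V E \<gamma> \<epsilon> m \<phi> \<longleftrightarrow>
     (\<forall>n\<in>{1..N}. legal_pos_strategy N V E n (\<phi> n)) \<and>
     (\<forall>s\<in>game_states N V. \<not> is_capture N s \<longrightarrow>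
        (let \<tau> = (\<lambda>n. pos_to_hist (\<phi> n)) in
          (\<forall>\<alpha>. legal_strategy N V E m \<alpha> \<longrightarrow>
               payoff N \<gamma> \<epsilon> m (\<tau>(m := \<alpha>)) s \<le> payoff N \<gamma> \<epsilon> m \<tau> s) \<and>
          (\<forall>\<beta>. (\<forall>n\<in>{1..N} - {m}. legal_strategy N V E n (\<beta> n)) \<longrightarrow>
               payoff N \<gamma> \<epsilon> m \<tau> s \<le> payoff N \<gamma> \<epsilon> m (\<beta>(m := \<tau> m)) s)))"

text \<open>CR-optimal strategies of token n: components of optimal pure positional strategy pairs
  of the modified CR game Gamma^N_N.\<close>
definition CR_optimal ::
  "nat \<Rightarrow> 'v set \<Rightarrow> ('v \<Rightarrow> 'v \<Rightarrow> bool) \<Rightarrow> real \<Rightarrow> real \<Rightarrow> nat \<Rightarrow> ('v state \<Rightarrow> 'v) \<Rightarrow> bool" where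
  "CR_optimal N V E \<gamma> \<epsilon> n f \<longleftrightarrow> (\<exists>\<phi>. optimal_pair N V E \<gamma> \<epsilon> N \<phi> \<and> \<phi> n = f)"

inductive_set reachable ::
  "nat \<Rightarrow> 'v set \<Rightarrow> ('v \<Rightarrow> 'v \<Rightarrow> bool) \<Rightarrow> 'v state \<Rightarrow> 'v state set"
  for N V E s0 where
  init: "s0 \<in> reachable N V E s0"
| mv: "s \<in> reachable N V E s0 \<Longrightarrow> \<not> is_capture N s \<Longrightarrow> v \<in> cnbhd V E (fst s (snd s))
       \<Longrightarrow> step N s v \<in> reachable N V E s0"

text \<open>A choice phi n m (strategy of token n in the chosen optimal pair of Gamma^m_N),
  which determines a trigger strategies profile.\<close>
definition trigger_choice ::
  "nat \<Rightarrow> 'v set \<Rightarrow> ('v \<Rightarrow> 'v \<Rightarrow> bool) \<Rightarrow> real \<Rightarrow> real \<Rightarrow> (nat \<Rightarrow> nat \<Rightarrow> 'v state \<Rightarrow> 'v) \<Rightarrow> bool" where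
  "trigger_choice N V E \<gamma> \<epsilon> \<phi> \<longleftrightarrow> (\<forall>m\<in>{1..N}. optimal_pair N V E \<gamma> \<epsilon> m (\<lambda>n. \<phi> n m))"

definition positional_trigger ::
  "nat \<Rightarrow> 'v set \<Rightarrow> ('v \<Rightarrow> 'v \<Rightarrow> bool) \<Rightarrow> real \<Rightarrow> real \<Rightarrow> 'v state \<Rightarrow> (nat \<Rightarrow> nat \<Rightarrow> 'v state \<Rightarrow> 'v) \<Rightarrow> bool" where
  "positional_trigger N V E \<gamma> \<epsilon> s0 \<phi> \<longleftrightarrow>
     (\<forall>n\<in>{1..N}. \<forall>m\<in>{1..N}. \<exists>f. CR_optimal N V E \<gamma> \<epsilon> n f \<and>
        (\<forall>s\<in>reachable N V E s0. snd s = n \<and> \<not> is_capture N s \<longrightarrow> \<phi> n m s = f s))"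

end

theory Submission
  imports Defs
begin

lemma adj2:
  assumes "simple_graph V E" "connected_graph V E" "card V = 2"
    "u \<in> V" "w \<in> V" "u \<noteq> w"
  shows "E u w"
proof -
  have Vuw: "V = {u, w}"
  proof -
    have "{u,w} \<subseteq> V" using assms by auto
    moreover have "finite V" using assms(1) by (simp add: simple_graph_def)
    moreover have "card {u,w} = 2" using assms(6) by simp
    ultimately show ?thesis using assms(3) by (metis card_subset_eq)
  qed
  have "E\<^sup>*\<^sup>* u w" using assms(2,4,5) by (simp add: connected_graph_def)
  then obtain y where "E u y" using assms(6) by (metis converse_rtranclpE)
  with assms(1) have "y \<in> V" "y \<noteq> u" by (auto simp: simple_graph_def)
  with Vuw \<open>E u y\<close> show ?thesis by auto
qed

lemma payoff_at:
  assumes "is_capture N (play N \<tau> s0 t)" "\<forall>t'<t. \<not> is_capture N (play N \<tau> s0 t')"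
  shows "payoff N \<gamma> \<epsilon> m \<tau> s0 = reward N \<epsilon> m (play N \<tau> s0 t) * \<gamma> ^ t"
proof -
  have "(LEAST t. is_capture N (play N \<tau> s0 t)) = t"
    by (rule Least_equality) (use assms not_less in auto)
  thus ?thesis using assms(1) unfolding payoff_def by (auto simp: Let_def)
qed

lemma reach_stay:
  assumes "s0 \<in> game_states N V" "N > 0" "\<not> is_capture N s0"
  shows "(fst s0, (snd s0 - 1 + j) mod N + 1) \<in> reachable N V E s0"
proof (induction j)
  case 0
  have "snd s0 \<in> {1..N}" using assms(1) by (auto simp: game_states_def)
  hence "(snd s0 - 1) mod N + 1 = snd s0" by auto
  moreover have "s0 \<in> reachable N V E s0" by (rule reachable.init)
  ultimately show ?case by simp
next
  case (Suc j)
  let ?s = "(fst s0, (snd s0 - 1 + j) mod N + 1)"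
  have cap: "\<not> is_capture N ?s \<or> is_capture N ?s" by simp
  have fV: "fst s0 \<in> {1..N} \<rightarrow>\<^sub>E V" using assms(1) by (auto simp: game_states_def)
  have "(snd s0 - 1 + j) mod N < N" using assms(2) by simp
  hence "(snd s0 - 1 + j) mod N + 1 \<in> {1..N}" by auto
  hence inV: "fst s0 ((snd s0 - 1 + j) mod N + 1) \<in> V" using fV by auto
  have st: "step N ?s (fst ?s (snd ?s)) = (fst s0, (snd s0 - 1 + Suc j) mod N + 1)"
    unfolding step_def next_token_def by (simp add: mod_Suc_eq)
  have nc: "\<not> is_capture N ?s" using assms(3) by (simp add: is_capture_def)
  have "fst ?s (snd ?s) \<in> cnbhd V E (fst ?s (snd ?s))" using inV by (simp add: cnbhd_def)
  from reachable.mv[OF Suc nc this] st show ?case by simp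
qed

lemma payoff_N_ge:
  assumes "\<not> is_capture N (play N \<tau> s 0)" "\<not> is_capture N (play N \<tau> s 1)"
    "0 < \<gamma>" "\<gamma> < (1::real)"
  shows "payoff N \<gamma> \<epsilon> N \<tau> s > - \<gamma>"
proof (cases "\<exists>t. is_capture N (play N \<tau> s t)")
  case True
  define t0 where "t0 = (LEAST t. is_capture N (play N \<tau> s t))"
  have "is_capture N (play N \<tau> s t0)" using True unfolding t0_def by (metis LeastI)
  have "t0 \<noteq> 0" using assms(1) \<open>is_capture N (play N \<tau> s t0)\<close> by metis
  moreover have "t0 \<noteq> 1" using assms(2) \<open>is_capture N (play N \<tau> s t0)\<close> by metis
  ultimately have "t0 \<ge> 2" by auto
  hence "\<gamma> ^ t0 \<le> \<gamma> ^ 2" using assms(3,4) by (intro power_decreasing) auto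
  moreover have "\<gamma> ^ 2 < \<gamma>" using assms(3,4) by (simp add: power2_eq_square)
  moreover have "payoff N \<gamma> \<epsilon> N \<tau> s = - (\<gamma> ^ t0)"
    using True unfolding payoff_def t0_def by (simp add: Let_def reward_def)
  ultimately show ?thesis by linarith
next
  case False
  then show ?thesis using assms(3) unfolding payoff_def by simp
qed

theorem mainTheorem2:
  fixes V :: "'v set" and E :: "'v \<Rightarrow> 'v \<Rightarrow> bool" and N :: nat
    and \<gamma> \<epsilon> :: real and s0 :: "'v state"
    and \<phi> :: "nat \<Rightarrow> nat \<Rightarrow> 'v state \<Rightarrow> 'v"
  assumes "simple_graph V E" and "connected_graph V E" and "card V = 2"
    and "N > 3"
    and "0 < \<epsilon>" and "\<epsilon> \<le> 1 / real (N - 1)"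
    and "s0 \<in> game_states N V" and "\<not> is_capture N s0"
    and "0 < \<gamma>" and "\<gamma> < 1"
    and "trigger_choice N V E \<gamma> \<epsilon> \<phi>"
  shows "\<not> positional_trigger N V E \<gamma> \<epsilon> s0 \<phi>"
proof
  assume pos: "positional_trigger N V E \<gamma> \<epsilon> s0 \<phi>"
  define x0 where "x0 = fst s0"
  define r where "r = x0 N"
  define ss where "ss = (x0, 1::nat)"
  have x0V: "x0 \<in> {1..N} \<rightarrow>\<^sub>E V" using assms(7) by (auto simp: game_states_def x0_def)
  have xV: "\<And>i. i \<in> {1..N} \<Longrightarrow> x0 i \<in> V" using x0V by auto
  have rV: "r \<in> V" unfolding r_def using xV assms(4) by auto
  have cops: "\<And>i. i \<in> {1..N-1} \<Longrightarrow> x0 i \<noteq> r"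
    using assms(8) by (auto simp: is_capture_def x0_def r_def)
  have ssG: "ss \<in> game_states N V" using x0V assms(4) by (simp add: game_states_def ss_def)
  have ssnc: "\<not> is_capture N ss" using assms(8) by (simp add: is_capture_def ss_def x0_def)
  have ssR: "ss \<in> reachable N V E s0"
  proof -
    have "snd s0 \<in> {1..N}" using assms(7) by (auto simp: game_states_def)
    hence "(snd s0 - 1 + (N - (snd s0 - 1))) mod N + 1 = 1" by simp
    with reach_stay[OF assms(7) _ assms(8), where j = "N - (snd s0 - 1)" and E = E] assms(4)
    show ?thesis by (simp add: ss_def x0_def)
  qed
  have nt1: "next_token N 1 = 2" "next_token N 2 = 3" using assms(4) by (auto simp: next_token_def)
  have leg_move: "\<And>n h. n \<in> {1..N} \<Longrightarrow> last h \<in> game_states N V \<Longrightarrow>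
      fst (last h) N \<in> cnbhd V E (fst (last h) n)"
  proof -
    fix n h assume n: "n \<in> {1..N}" and g: "last h \<in> game_states N V"
    have "fst (last h) \<in> {1..N} \<rightarrow>\<^sub>E V" using g by (auto simp: game_states_def)
    hence a: "fst (last h) N \<in> V" "fst (last h) n \<in> V" using n assms(4) by auto
    show "fst (last h) N \<in> cnbhd V E (fst (last h) n)"
      using adj2[OF assms(1-3) a(2) a(1)] a unfolding cnbhd_def by (cases "fst (last h) n = fst (last h) N") auto
  qed
  have leg_stay: "\<And>n h. n \<in> {1..N} \<Longrightarrow> last h \<in> game_states N V \<Longrightarrow>
      fst (last h) n \<in> cnbhd V E (fst (last h) n)"
  proof -
    fix n h assume n: "n \<in> {1..N}" and g: "last h \<in> game_states N V"
    have "fst (last h) \<in> {1..N} \<rightarrow>\<^sub>E V" using g by (auto simp: game_states_def)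
    thus "fst (last h) n \<in> cnbhd V E (fst (last h) n)" using n by (auto simp: cnbhd_def)
  qed
  have A: "f ss = r" if cr: "CR_optimal N V E \<gamma> \<epsilon> 1 f" for f
  proof (rule ccontr)
    assume ne: "f ss \<noteq> r"
    obtain \<psi> where op: "optimal_pair N V E \<gamma> \<epsilon> N \<psi>" and pf: "\<psi> 1 = f"
      using cr by (auto simp: CR_optimal_def)
    define \<tau> where "\<tau> = (\<lambda>n. pos_to_hist (\<psi> n))"
    define \<beta> where "\<beta> = (\<lambda>(n::nat) (h::'v state list). fst (last h) N)"
    have legb: "\<forall>n\<in>{1..N} - {N}. legal_strategy N V E n (\<beta> n)"
      using leg_move by (auto simp: legal_strategy_def \<beta>_def)
    have ineq: "payoff N \<gamma> \<epsilon> N \<tau> ss \<le> payoff N \<gamma> \<epsilon> N (\<beta>(N := \<tau> N)) ss"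
      using op ssG ssnc legb unfolding optimal_pair_def \<tau>_def Let_def by blast
    have "N \<noteq> 1" using assms(4) by simp
    have p1: "play N (\<beta>(N := \<tau> N)) ss 1 = (x0(1 := r), 2)"
      using \<open>N \<noteq> 1\<close> nt1 by (simp add: play_def step_def ss_def \<beta>_def r_def)
    have c1: "is_capture N (x0(1 := r), 2)"
      using \<open>N \<noteq> 1\<close> assms(4) r_def unfolding is_capture_def by (intro bexI[of _ 1]) auto
    have rhs: "payoff N \<gamma> \<epsilon> N (\<beta>(N := \<tau> N)) ss = - \<gamma>"
      using payoff_at[of N "\<beta>(N := \<tau> N)" ss 1 \<gamma> \<epsilon> N] p1 c1 ssnc
      by (simp add: play_def reward_def)
    have q1: "play N \<tau> ss 1 = (x0(1 := f ss), 2)"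
      using nt1 pf by (simp add: play_def step_def ss_def \<tau>_def pos_to_hist_def)
    have nc1: "\<not> is_capture N (x0(1 := f ss), 2)"
      using ne cops \<open>N \<noteq> 1\<close> unfolding is_capture_def r_def by auto
    have "payoff N \<gamma> \<epsilon> N \<tau> ss > - \<gamma>"
      using payoff_N_ge[of N \<tau> ss \<gamma> \<epsilon>] q1 nc1 ssnc assms(9,10) by (simp add: play_def)
    with ineq rhs show False by linarith
  qed
  have B: "\<phi> 1 3 ss \<noteq> r"
  proof
    assume eq: "\<phi> 1 3 ss = r"
    have op: "optimal_pair N V E \<gamma> \<epsilon> 3 (\<lambda>n. \<phi> n 3)"
      using assms(11) assms(4) by (auto simp: trigger_choice_def)
    define \<tau> where "\<tau> = (\<lambda>n. pos_to_hist (\<phi> n 3))"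
    define \<beta> where "\<beta> = (\<lambda>(n::nat) (h::'v state list). if n = 2 then fst (last h) N else fst (last h) n)"
    have legb: "\<forall>n\<in>{1..N} - {3}. legal_strategy N V E n (\<beta> n)"
      using leg_move leg_stay by (auto simp: legal_strategy_def \<beta>_def)
    have ineq: "payoff N \<gamma> \<epsilon> 3 \<tau> ss \<le> payoff N \<gamma> \<epsilon> 3 (\<beta>(3 := \<tau> 3)) ss"
      using op ssG ssnc legb unfolding optimal_pair_def \<tau>_def Let_def by blast
    have N1: "N \<noteq> 1" "N \<noteq> 2" "N \<noteq> 3" "Suc 0 \<noteq> N - Suc 0" using assms(4) by auto
    have K1: "{i\<in>{1..N-1}. (x0(1 := r)) i = r} = {1}" using cops assms(4) by auto
    have K2: "{i\<in>{1..N-1}. (x0(2 := r)) i = r} = {2}" using cops assms(4) by auto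
    have x3: "x0 3 \<noteq> r" using cops assms(4) by auto
    have q1: "play N \<tau> ss 1 = (x0(1 := r), 2)"
      using nt1 eq by (simp add: play_def step_def ss_def \<tau>_def pos_to_hist_def)
    have c1: "is_capture N (x0(1 := r), 2)"
      using N1 assms(4) r_def unfolding is_capture_def by (intro bexI[of _ 1]) auto
    have "reward N \<epsilon> 3 (x0(1 := r), 2) = \<epsilon> / real (N - 2)"
      using K1 N1 x3 assms(4) by (simp add: reward_def r_def)
    hence lhs: "payoff N \<gamma> \<epsilon> 3 \<tau> ss = \<epsilon> / real (N - 2) * \<gamma>"
      using payoff_at[of N \<tau> ss 1 \<gamma> \<epsilon> 3] q1 c1 ssnc by (simp add: play_def)
    have h1: "history N (\<beta>(3 := \<tau> 3)) ss 1 = [ss, (x0, 2)]"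
      using nt1 by (simp add: step_def ss_def \<beta>_def)
    have p1: "play N (\<beta>(3 := \<tau> 3)) ss 1 = (x0, 2)" using h1 by (simp add: play_def)
    have p2: "play N (\<beta>(3 := \<tau> 3)) ss 2 = (x0(2 := r), 3)"
      using h1 nt1 by (simp add: play_def step_def \<beta>_def r_def numeral_2_eq_2)
    have c2: "is_capture N (x0(2 := r), 3)"
      using N1 assms(4) r_def unfolding is_capture_def by (intro bexI[of _ 2]) auto
    have "reward N \<epsilon> 3 (x0(2 := r), 3) = \<epsilon> / real (N - 2)"
      using K2 N1 x3 assms(4) by (simp add: reward_def r_def)
    moreover have "\<forall>t'<2. \<not> is_capture N (play N (\<beta>(3 := \<tau> 3)) ss t')"
    proof (intro allI impI)
      fix t' :: nat assume "t' < 2"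
      hence "t' = 0 \<or> t' = 1" by auto
      thus "\<not> is_capture N (play N (\<beta>(3 := \<tau> 3)) ss t')"
        using p1 ssnc by (auto simp: play_def ss_def is_capture_def)
    qed
    ultimately have rhs: "payoff N \<gamma> \<epsilon> 3 (\<beta>(3 := \<tau> 3)) ss = \<epsilon> / real (N - 2) * \<gamma> ^ 2"
      using payoff_at[of N "\<beta>(3 := \<tau> 3)" ss 2 \<gamma> \<epsilon> 3] p2 c2 by simp
    have pos': "\<epsilon> / real (N - 2) > 0" using assms(4,5) by simp
    have "\<gamma> ^ 2 < \<gamma>" using assms(9,10) by (simp add: power2_eq_square)
    hence lt: "\<epsilon> / real (N - 2) * \<gamma> ^ 2 < \<epsilon> / real (N - 2) * \<gamma>" using pos' by (rule mult_strict_left_mono)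
    have "\<epsilon> / real (N - 2) * \<gamma> \<le> \<epsilon> / real (N - 2) * \<gamma> ^ 2" using ineq unfolding lhs rhs .
    from leD[OF this] lt show False by contradiction
  qed
  obtain f where cr: "CR_optimal N V E \<gamma> \<epsilon> 1 f"
    and ag: "\<forall>s\<in>reachable N V E s0. snd s = 1 \<and> \<not> is_capture N s \<longrightarrow> \<phi> 1 3 s = f s"
    using pos assms(4) unfolding positional_trigger_def by fastforce
  have "\<phi> 1 3 ss = f ss" using ag ssR ssnc by (simp add: ss_def)
  with A[OF cr] B show False by simp
qed

end
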